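(* Let $(X,\beta)$ be a locally finite prechart and $x,y\in X$ with $x\not\sim y$. Then there exists $i\in\mathbb{N}$ such that $\Phi^{(i)}_\beta(x,y)=\Phi^{(i+1)}_\beta(x,y)$.
   Context: Fix a set $V=\{v_1,v_2,\dots\}$ of variables and a set $\Sigma$ of letters. A prechart is a pair $(X,\beta)$ with $\beta:X\to P_{\mathrm{fin}}(\Sigma\times X+V)$; write $x\xrightarrow{a}x'$ iff $(a,x')\in\beta(x)$ and $E(x)=\beta(x)\cap V$. It is locally finite if from each state only finitely many states are reachable. A bisimulation is a relation $R\subseteq X\times X$ such that whenever $(x,y)\in R$: $E(x)=E(y)$; each $x\xrightarrow{a}x'$ is matched by some $y\xrightarrow{a}y'$ with $(x',y')\in R$; and symmetrically; $x\sim y$ iff related by some bisimulation. A 1-bounded pseudometric on $X$ is $d:X\times X\to[0,1]$ with $d(x,x)=0$, symmetry and triangle inequality. The discrete pseudometric is $\top(x,y)=0$ if $x=y$, $1$ otherwise. For a pseudometric $d$, $d^\uparrow$ on $\Sigma\times X+V$ is $d^\uparrow((a,x),(a,y))=\tfrac12 d(x,y)$, $d^\uparrow(m,n)=0$ if $m=n$, $1$ otherwise. $\mathcal H(d)(A,B)=\max\{\sup_{x\in A}\inf_{y\in B}d(x,y),\sup_{y\in B}\inf_{x\in A}d(y,x)\}$ with $\sup\emptyset=0$, $\inf\emptyset=1$. $\Phi_\beta(d)(x,y)=\mathcal H(d^\uparrow)(\beta(x),\beta(y))$; $\Phi^{(0)}_\beta=\top$, $\Phi^{(i+1)}_\beta=\Phi_\beta(\Phi^{(i)}_\beta)$.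 *)

theory Defs
  imports Main "HOL-Library.Extended_Real"
begin

text \<open>States X are the elements of the type 'x, letters the type 'a, and the variables
  V = {v1, v2, ...} are represented by nat.\<close>

type_synonym ('a, 'x) prechart = "'x \<Rightarrow> (('a \<times> 'x) + nat) set"

definition prechart :: "('a, 'x) prechart \<Rightarrow> bool" where
  "prechart \<beta> \<longleftrightarrow> (\<forall>x. finite (\<beta> x))"

definition trans_step :: "('a, 'x) prechart \<Rightarrow> 'x \<Rightarrow> 'a \<Rightarrow> 'x \<Rightarrow> bool" where
  "trans_step \<beta> x a x' \<longleftrightarrow> Inl (a, x') \<in> \<beta> x"

definition E :: "('a, 'x) prechart \<Rightarrow> 'x \<Rightarrow> nat set" where
  "E \<beta> x = {v. Inr v \<in> \<beta> x}"

definition step_rel :: "('a, 'x) prechart \<Rightarrow> ('x \<times> 'x) set" where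
  "step_rel \<beta> = {(x, x'). \<exists>a. trans_step \<beta> x a x'}"

definition locally_finite :: "('a, 'x) prechart \<Rightarrow> bool" where
  "locally_finite \<beta> \<longleftrightarrow> (\<forall>x. finite {y. (x, y) \<in> (step_rel \<beta>)\<^sup>*})"

definition bisimulation :: "('a, 'x) prechart \<Rightarrow> ('x \<times> 'x) set \<Rightarrow> bool" where
  "bisimulation \<beta> R \<longleftrightarrow> (\<forall>(x, y) \<in> R.
      E \<beta> x = E \<beta> y
    \<and> (\<forall>a x'. trans_step \<beta> x a x' \<longrightarrow> (\<exists>y'. trans_step \<beta> y a y' \<and> (x', y') \<in> R))
    \<and> (\<forall>a y'. trans_step \<beta> y a y' \<longrightarrow> (\<exists>x'. trans_step \<beta> x a x' \<and> (x', y') \<in> R)))"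

definition bisimilar :: "('a, 'x) prechart \<Rightarrow> 'x \<Rightarrow> 'x \<Rightarrow> bool" where
  "bisimilar \<beta> x y \<longleftrightarrow> (\<exists>R. bisimulation \<beta> R \<and> (x, y) \<in> R)"

definition top_dist :: "'x \<Rightarrow> 'x \<Rightarrow> real" where
  "top_dist x y = (if x = y then 0 else 1)"

fun lift_dist :: "('x \<Rightarrow> 'x \<Rightarrow> real) \<Rightarrow> ('a \<times> 'x) + nat \<Rightarrow> ('a \<times> 'x) + nat \<Rightarrow> real" where
  "lift_dist d (Inl (a, x)) (Inl (b, y)) =
     (if a = b then d x y / 2 else 1)"
| "lift_dist d m n = (if m = n then 0 else 1)"

definition sup0 :: "'b set \<Rightarrow> ('b \<Rightarrow> real) \<Rightarrow> real" where
  "sup0 A f = (if A = {} then 0 else (SUP x\<in>A. f x))"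

definition inf1 :: "'b set \<Rightarrow> ('b \<Rightarrow> real) \<Rightarrow> real" where
  "inf1 A f = (if A = {} then 1 else (INF x\<in>A. f x))"

definition hausdorff :: "('b \<Rightarrow> 'b \<Rightarrow> real) \<Rightarrow> 'b set \<Rightarrow> 'b set \<Rightarrow> real" where
  "hausdorff d A B = max (sup0 A (\<lambda>x. inf1 B (\<lambda>y. d x y)))
                         (sup0 B (\<lambda>y. inf1 A (\<lambda>x. d y x)))"

definition Phi :: "('a, 'x) prechart \<Rightarrow> ('x \<Rightarrow> 'x \<Rightarrow> real) \<Rightarrow> 'x \<Rightarrow> 'x \<Rightarrow> real" where
  "Phi \<beta> d x y = hausdorff (lift_dist d) (\<beta> x) (\<beta> y)"

primrec Phi_iter :: "('a, 'x) prechart \<Rightarrow> nat \<Rightarrow> 'x \<Rightarrow> 'x \<Rightarrow> real" where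
  "Phi_iter \<beta> 0 = top_dist"
| "Phi_iter \<beta> (Suc i) = Phi \<beta> (Phi_iter \<beta> i)"

end

theory Submission
  imports Defs
begin

lemma sup0_ge: "finite A \<Longrightarrow> a \<in> A \<Longrightarrow> f a \<le> sup0 A f"
  unfolding sup0_def by (auto simp: cSup_eq_Max)

lemma sup0_in: "finite A \<Longrightarrow> sup0 A f \<in> insert 0 (f ` A)"
  unfolding sup0_def by (auto intro: Max_in simp: cSup_eq_Max)

lemma inf1_in: "finite A \<Longrightarrow> inf1 A f \<in> insert 1 (f ` A)"
  unfolding inf1_def by (auto intro: Min_in simp: cInf_eq_Min)

lemma inf1_le: "finite A \<Longrightarrow> a \<in> A \<Longrightarrow> inf1 A f \<le> f a"
  unfolding inf1_def by (auto simp: cInf_eq_Min)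

lemma inf1_ge: "finite A \<Longrightarrow> (\<And>a. a \<in> A \<Longrightarrow> c \<le> f a) \<Longrightarrow> c \<le> 1 \<Longrightarrow> c \<le> inf1 A f"
  unfolding inf1_def by (auto simp: cInf_eq_Min)

lemma sup0_le: "finite A \<Longrightarrow> (\<And>a. a \<in> A \<Longrightarrow> f a \<le> c) \<Longrightarrow> 0 \<le> c \<Longrightarrow> sup0 A f \<le> c"
  unfolding sup0_def by (auto simp: cSup_eq_Max)

lemma inf1_mono: "finite A \<Longrightarrow> (\<And>a. a \<in> A \<Longrightarrow> f a \<le> g a) \<Longrightarrow> inf1 A f \<le> inf1 A g"
  unfolding inf1_def apply (auto simp: cInf_eq_Min)
  by (smt (verit, del_insts) Min.boundedI Min_le empty_is_image finite_imageI imageE image_eqI)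

lemma sup0_mono: "finite A \<Longrightarrow> (\<And>a. a \<in> A \<Longrightarrow> f a \<le> g a) \<Longrightarrow> sup0 A f \<le> sup0 A g"
  unfolding sup0_def apply (auto simp: cSup_eq_Max)
  by (smt (verit, del_insts) Max.boundedI Max_ge empty_is_image finite_imageI imageE image_eqI)

lemma hausdorff_comm: "hausdorff d A B = hausdorff d B A"
  unfolding hausdorff_def by simp

lemma Phi_iter_sym: "Phi_iter \<beta> i u v = Phi_iter \<beta> i v u"
  by (cases i) (auto simp: top_dist_def Phi_def intro: hausdorff_comm)

definition Sset :: "real set" where "Sset = insert 0 (range (\<lambda>k::nat. 1/2^k))"

lemma half_in: "a \<in> Sset \<Longrightarrow> a / 2 \<in> Sset"
proof -
  assume "a \<in> Sset"
  then obtain k where "a = 0 \<or> a = 1/2^k" unfolding Sset_def by auto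
  then show ?thesis unfolding Sset_def
    by (auto intro!: image_eqI[where x="Suc k"])
qed

lemma one_in: "(1::real) \<in> Sset" "(0::real) \<in> Sset"
  unfolding Sset_def by (auto intro!: image_eqI[where x=0])

lemma lift_in: "(\<And>p q. d p q \<in> Sset) \<Longrightarrow> lift_dist d m n \<in> Sset"
  by (cases "(d, m, n)" rule: lift_dist.cases) (auto simp: one_in half_in)

lemma Phi_in:
  assumes "prechart \<beta>" "\<And>p q. d p q \<in> Sset"
  shows "Phi \<beta> d u v \<in> Sset"
proof -
  have f: "finite (\<beta> w)" for w using assms(1) unfolding prechart_def by auto
  have l: "lift_dist d m n \<in> Sset" for m n using lift_in assms(2) by blast
  have one: "(1::real) \<in> Sset" "(0::real) \<in> Sset" unfolding Sset_def by (auto intro!: image_eqI[where x=0])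
  have i: "inf1 B g \<in> Sset" if "finite B" "\<And>b. g b \<in> Sset" for B and g :: "_ \<Rightarrow> real"
    using inf1_in[OF that(1), of g] that(2) one by auto
  have s: "sup0 B g \<in> Sset" if "finite B" "\<And>b. g b \<in> Sset" for B and g :: "_ \<Rightarrow> real"
    using sup0_in[OF that(1), of g] that(2) one by auto
  show ?thesis unfolding Phi_def hausdorff_def max_def
    using s[OF f, OF i[OF f l]] by auto
qed

lemma Phi_iter_in: "prechart \<beta> \<Longrightarrow> Phi_iter \<beta> i u v \<in> Sset"
proof (induction i arbitrary: u v)
  case 0
  then show ?case by (auto simp: Sset_def top_dist_def intro!: image_eqI[where x=0])
next
  case (Suc i)
  then show ?case using Phi_in[of \<beta> "Phi_iter \<beta> i"] by auto
qed

lemma Sset_bounds: "a \<in> Sset \<Longrightarrow> 0 \<le> a \<and> a \<le> 1"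
  unfolding Sset_def by auto

lemma lift_mono: "(\<And>p q. d p q \<le> d' p q) \<Longrightarrow> lift_dist d m n \<le> lift_dist d' m n"
  by (cases "(d, m, n)" rule: lift_dist.cases) auto

lemma Phi_mono:
  assumes "prechart \<beta>" "\<And>p q. d p q \<le> d' p q"
  shows "Phi \<beta> d u v \<le> Phi \<beta> d' u v"
proof -
  have f: "finite (\<beta> w)" for w using assms(1) unfolding prechart_def by auto
  show ?thesis unfolding Phi_def hausdorff_def
    apply (rule max.mono)
     apply (rule sup0_mono[OF f], rule inf1_mono[OF f], rule lift_mono[OF assms(2)])
    apply (rule sup0_mono[OF f], rule inf1_mono[OF f], rule lift_mono[OF assms(2)])
    done
qed

lemma Phi_diag:
  assumes "prechart \<beta>" "\<And>p. d p p = 0"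
  shows "Phi \<beta> d u u \<le> 0"
proof -
  have f: "finite (\<beta> w)" for w using assms(1) unfolding prechart_def by auto
  have l: "lift_dist d m m = 0" for m using assms(2)
    by (cases "(d, m, m)" rule: lift_dist.cases) auto
  have "sup0 (\<beta> u) (\<lambda>x. inf1 (\<beta> u) (\<lambda>y. lift_dist d x y)) \<le> 0"
    apply (rule sup0_le[OF f]) using inf1_le[OF f] l apply metis by simp
  then show ?thesis unfolding Phi_def hausdorff_def by simp
qed

lemma Phi_iter_diag: "prechart \<beta> \<Longrightarrow> Phi_iter \<beta> i u u = 0"
proof (induction i arbitrary: u)
  case 0 then show ?case by (simp add: top_dist_def)
next
  case (Suc i)
  then show ?case using Phi_diag[of \<beta> "Phi_iter \<beta> i" u] Sset_bounds[OF Phi_iter_in[OF Suc.prems, of "Suc i" u u]]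
    by auto
qed

lemma Phi_iter_dec: "prechart \<beta> \<Longrightarrow> Phi_iter \<beta> (Suc i) u v \<le> Phi_iter \<beta> i u v"
proof (induction i arbitrary: u v)
  case 0
  then show ?case using Phi_iter_diag[OF 0, of "Suc 0" u] Sset_bounds[OF Phi_iter_in[OF 0, of "Suc 0" u v]]
    by (auto simp: top_dist_def)
next
  case (Suc i)
  then show ?case using Phi_mono[OF Suc.prems, of "Phi_iter \<beta> (Suc i)" "Phi_iter \<beta> i"] by auto
qed

lemma Phi_ge:
  assumes "prechart \<beta>" "m \<in> \<beta> u"
  shows "inf1 (\<beta> v) (\<lambda>m'. lift_dist d m m') \<le> Phi \<beta> d u v"
proof -
  have f: "finite (\<beta> w)" for w using assms(1) unfolding prechart_def by auto
  show ?thesis unfolding Phi_def hausdorff_def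
    using sup0_ge[OF f assms(2), of "\<lambda>x. inf1 (\<beta> v) (\<lambda>y. lift_dist d x y)"] by linarith
qed


definition Rrel :: "('a, 'x) prechart \<Rightarrow> ('x \<times> 'x) set" where
  "Rrel \<beta> = {(u,v). \<forall>e>0. \<exists>i. Phi_iter \<beta> i u v < e}"

lemma Rrel_sym:
  assumes "(u,v) \<in> Rrel \<beta>" shows "(v,u) \<in> Rrel \<beta>"
proof -
  have "\<forall>e>0. \<exists>i. Phi_iter \<beta> i u v < e" using assms unfolding Rrel_def by auto
  then have "\<forall>e>0. \<exists>i. Phi_iter \<beta> i v u < e" by (simp only: Phi_iter_sym[of \<beta> _ v u])
  then show ?thesis unfolding Rrel_def by auto
qed

lemma Rrel_E:
  assumes p: "prechart \<beta>" and r: "(u,v) \<in> Rrel \<beta>" and n: "Inr n \<in> \<beta> u"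
  shows "Inr n \<in> \<beta> v"
proof (rule ccontr)
  assume nv: "Inr n \<notin> \<beta> v"
  have f: "finite (\<beta> w)" for w using p unfolding prechart_def by auto
  have "\<forall>e>0. \<exists>i. Phi_iter \<beta> i u v < e" using r unfolding Rrel_def by auto
  then obtain i where i: "Phi_iter \<beta> i u v < 1" using zero_less_one by blast
  have "1 \<le> inf1 (\<beta> v) (\<lambda>m'. lift_dist (Phi_iter \<beta> i) (Inr n) m')"
    apply (rule inf1_ge[OF f])
    subgoal for m' using nv by (cases m') auto
    by simp
  also have "\<dots> \<le> Phi_iter \<beta> (Suc i) u v" using Phi_ge[OF p n] by simp
  also have "\<dots> \<le> Phi_iter \<beta> i u v" by (rule Phi_iter_dec[OF p])
  finally show False using i by simp
qed

lemma Rrel_step: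
  assumes p: "prechart \<beta>" and r: "(u,v) \<in> Rrel \<beta>" and t: "trans_step \<beta> u a u'"
  shows "\<exists>v'. trans_step \<beta> v a v' \<and> (u',v') \<in> Rrel \<beta>"
proof (rule ccontr)
  assume nex: "\<not> ?thesis"
  have f: "finite (\<beta> w)" for w using p unfolding prechart_def by auto
  define S where "S = {v'. trans_step \<beta> v a v'}"
  have "S \<subseteq> (\<lambda>m. case m of Inl (b,w) \<Rightarrow> w | Inr _ \<Rightarrow> v) ` \<beta> v"
    unfolding S_def trans_step_def by (auto intro: rev_image_eqI)
  then have fS: "finite S" using f finite_subset by blast
  have "\<forall>w\<in>S. \<exists>e>0. \<forall>i. e \<le> Phi_iter \<beta> i u' w"
    using nex unfolding S_def Rrel_def by (auto simp: not_less)
  from bchoice[OF this] obtain ef where ef0: "\<forall>w\<in>S. ef w > 0 \<and> (\<forall>i. ef w \<le> Phi_iter \<beta> i u' w)"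
    by blast
  then have ef: "\<And>w. w \<in> S \<Longrightarrow> ef w > 0 \<and> (\<forall>i. ef w \<le> Phi_iter \<beta> i u' w)" by blast
  define e0 where "e0 = Min (insert 1 (ef ` S))"
  have e0pos: "e0 > 0" unfolding e0_def using fS ef by (auto simp: Min_gr_iff)
  have e01: "e0 \<le> 1" unfolding e0_def using fS by auto
  have e0le: "e0 \<le> ef w" if "w \<in> S" for w unfolding e0_def using fS that by auto
  have bound: "e0 / 2 \<le> Phi_iter \<beta> (Suc i) u v" for i
  proof -
    have "e0 / 2 \<le> inf1 (\<beta> v) (\<lambda>m'. lift_dist (Phi_iter \<beta> i) (Inl (a, u')) m')"
    proof (rule inf1_ge[OF f])
      fix m' assume m': "m' \<in> \<beta> v"
      show "e0 / 2 \<le> lift_dist (Phi_iter \<beta> i) (Inl (a, u')) m'"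
      proof (cases m')
        case (Inl bw)
        then obtain b w where bw: "m' = Inl (b, w)" by (cases bw) auto
        show ?thesis
        proof (cases "b = a")
          case True
          then have "w \<in> S" using m' bw unfolding S_def trans_step_def by auto
          then have "e0 \<le> Phi_iter \<beta> i u' w" using e0le ef by (meson order_trans)
          then show ?thesis using bw True by simp
        next
          case False then show ?thesis using bw e01 by simp
        qed
      next
        case (Inr k) then show ?thesis using e01 by simp
      qed
    qed (use e01 in simp)
    also have "\<dots> \<le> Phi_iter \<beta> (Suc i) u v"
      using Phi_ge[OF p, of "Inl (a, u')" u] t unfolding trans_step_def by simp
    finally show ?thesis .
  qed
  have "\<forall>e>0. \<exists>i. Phi_iter \<beta> i u v < e" using r unfolding Rrel_def by auto
  moreover have "e0 / 2 > 0" using e0pos by simp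
  ultimately obtain i where i: "Phi_iter \<beta> i u v < e0 / 2" by blast
  have "Phi_iter \<beta> (Suc i) u v \<le> Phi_iter \<beta> i u v" by (rule Phi_iter_dec[OF p])
  with bound[of i] i show False by simp
qed

lemma Rrel_bisim:
  assumes p: "prechart \<beta>" shows "bisimulation \<beta> (Rrel \<beta>)"
  unfolding bisimulation_def
proof (intro ballI)
  fix z assume z: "z \<in> Rrel \<beta>"
  obtain u v where uv: "z = (u,v)" by (cases z)
  with z have r: "(u,v) \<in> Rrel \<beta>" by simp
  have c1: "E \<beta> u = E \<beta> v" 
  proof -
    have "Inr n \<in> \<beta> u \<longleftrightarrow> Inr n \<in> \<beta> v" for n
      using Rrel_E[OF p r, of n] Rrel_E[OF p Rrel_sym[OF r], of n] by (intro iffI)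
    then show ?thesis unfolding E_def by simp
  qed
  have c2: "\<forall>a x'. trans_step \<beta> u a x' \<longrightarrow> (\<exists>y'. trans_step \<beta> v a y' \<and> (x', y') \<in> Rrel \<beta>)"
    using Rrel_step[OF p r] by blast
  have c3: "\<forall>a y'. trans_step \<beta> v a y' \<longrightarrow> (\<exists>x'. trans_step \<beta> u a x' \<and> (x', y') \<in> Rrel \<beta>)"
  proof (intro allI impI)
    fix a y' assume "trans_step \<beta> v a y'"
    from Rrel_step[OF p Rrel_sym[OF r] this] obtain x' where "trans_step \<beta> u a x'" "(y', x') \<in> Rrel \<beta>"
      by blast
    then show "\<exists>x'. trans_step \<beta> u a x' \<and> (x', y') \<in> Rrel \<beta>" using Rrel_sym[of y' x' \<beta>] by blast
  qed
  show "case z of (x, y) \<Rightarrow> E \<beta> x = E \<beta> y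
    \<and> (\<forall>a x'. trans_step \<beta> x a x' \<longrightarrow> (\<exists>y'. trans_step \<beta> y a y' \<and> (x', y') \<in> Rrel \<beta>))
    \<and> (\<forall>a y'. trans_step \<beta> y a y' \<longrightarrow> (\<exists>x'. trans_step \<beta> x a x' \<and> (x', y') \<in> Rrel \<beta>))"
    using c1 c2 c3 uv by simp
qed

lemma Sset_step: "b \<in> Sset \<Longrightarrow> b < (1/2^i::real) \<Longrightarrow> b \<le> 1/2^Suc i"
proof -
  assume b: "b \<in> Sset" "b < 1/2^i"
  then obtain k where "b = 0 \<or> b = 1/2^k" unfolding Sset_def by auto
  then show ?thesis
  proof
    assume bk: "b = 1/2^k"
    with b have "(2::real)^i < 2^k" by (simp add: divide_simps)
    then have "i < k" by (simp add: power_strict_increasing_iff)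
    then have "(2::real)^Suc i \<le> 2^k" by (intro power_increasing) auto
    then have "1/(2::real)^k \<le> 1/2^Suc i" by (rule divide_left_mono) auto
    then show ?thesis using bk by simp
  qed simp
qed

theorem mainTheorem8:
  fixes \<beta> :: "('a, 'x) prechart" and x y :: 'x
  assumes "prechart \<beta>"
    and "locally_finite \<beta>"
    and "\<not> bisimilar \<beta> x y"
  shows "\<exists>i::nat. Phi_iter \<beta> i x y = Phi_iter \<beta> (Suc i) x y"
proof (rule ccontr)
  assume "\<not> ?thesis"
  then have ne: "Phi_iter \<beta> i x y \<noteq> Phi_iter \<beta> (Suc i) x y" for i by auto
  have lt: "Phi_iter \<beta> (Suc i) x y < Phi_iter \<beta> i x y" for i
    using ne[of i] Phi_iter_dec[OF assms(1), of i x y] by linarith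
  have le: "Phi_iter \<beta> i x y \<le> 1/2^i" for i
  proof (induction i)
    case 0 then show ?case by (simp add: top_dist_def)
  next
    case (Suc i)
    have "Phi_iter \<beta> (Suc i) x y < 1/2^i" using lt[of i] Suc by linarith
    then show ?case using Sset_step[OF Phi_iter_in[OF assms(1)]] by blast
  qed
  have "(x,y) \<in> Rrel \<beta>" unfolding Rrel_def
  proof (clarify)
    fix e :: real assume e: "0 < e"
    obtain n where n: "(1/2::real)^n < e" using real_arch_pow_inv[OF e, of "1/2"] by auto
    show "\<exists>i. Phi_iter \<beta> i x y < e"
      using le[of n] n by (intro exI[of _ n]) (simp add: power_one_over)
  qed
  then have "bisimilar \<beta> x y" unfolding bisimilar_def using Rrel_bisim[OF assms(1)] by blast
  with assms(3) show False by simp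
qed

end
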